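(* $([-1,1],\oplus,-1,1)$, where $[-1,1]$ carries the Euclidean topology and $x\oplus y=\tfrac{x+y}{2}$, is a parametrised interval object in the category $\mathbf{Top}$ of topological spaces: for every space $P$, every midpoint-convex body $(A,m)$ in $\mathbf{Top}$ and all continuous $x_{-1},x_1\colon P\to A$ there is a unique continuous $h\colon P\times[-1,1]\to A$ with $h(p,-1)=x_{-1}(p)$, $h(p,1)=x_1(p)$ and $h(p,x\oplus y)=m(h(p,x),h(p,y))$.
   Context: In $\mathbf{Top}$ (products with product topology), a midpoint object is a space $A$ with continuous $m\colon A\times A\to A$ satisfying $m(x,x)=x$, $m(x,y)=m(y,x)$, $m(m(x,y),m(z,w))=m(m(x,z),m(y,w))$; cancellative if $m(x,y)=m(x,z)$ implies $y=z$; iterative if for every space $X$ and continuous $c\colon X\to A\times X$ there is a unique continuous $u\colon X\to A$ with $u=m\circ(\mathrm{id}_A\times u)\circ c$. A midpoint-convex body is a cancellative iterative midpoint object. *)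

theory Defs
  imports "HOL-Analysis.Analysis"
begin

definition midpoint_object :: "'a topology \<Rightarrow> ('a \<Rightarrow> 'a \<Rightarrow> 'a) \<Rightarrow> bool" where
  "midpoint_object A m \<longleftrightarrow>
     continuous_map (prod_topology A A) A (\<lambda>(x, y). m x y) \<and>
     (\<forall>x\<in>topspace A. m x x = x) \<and>
     (\<forall>x\<in>topspace A. \<forall>y\<in>topspace A. m x y = m y x) \<and>
     (\<forall>x\<in>topspace A. \<forall>y\<in>topspace A. \<forall>z\<in>topspace A. \<forall>w\<in>topspace A.
        m (m x y) (m z w) = m (m x z) (m y w))"

definition cancellative :: "'a topology \<Rightarrow> ('a \<Rightarrow> 'a \<Rightarrow> 'a) \<Rightarrow> bool" where
  "cancellative A m \<longleftrightarrow>
     (\<forall>x\<in>topspace A. \<forall>y\<in>topspace A. \<forall>z\<in>topspace A. m x y = m x z \<longrightarrow> y = z)"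

text \<open>Iterativity, quantifying over all test spaces X whose points live in the type 'x.\<close>
definition iterative_wrt :: "'x itself \<Rightarrow> 'a topology \<Rightarrow> ('a \<Rightarrow> 'a \<Rightarrow> 'a) \<Rightarrow> bool" where
  "iterative_wrt _ A m \<longleftrightarrow>
     (\<forall>(X :: 'x topology) c. continuous_map X (prod_topology A X) c \<longrightarrow>
        (\<exists>u. continuous_map X A u \<and>
             (\<forall>x\<in>topspace X. u x = m (fst (c x)) (u (snd (c x)))) \<and>
             (\<forall>v. continuous_map X A v \<and>
                  (\<forall>x\<in>topspace X. v x = m (fst (c x)) (v (snd (c x)))) \<longrightarrow>
                  (\<forall>x\<in>topspace X. v x = u x))))"

definition midpoint_convex_body_wrt :: "'x itself \<Rightarrow> 'a topology \<Rightarrow> ('a \<Rightarrow> 'a \<Rightarrow> 'a) \<Rightarrow> bool" where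
  "midpoint_convex_body_wrt T A m \<longleftrightarrow>
     midpoint_object A m \<and> cancellative A m \<and> iterative_wrt T A m"

end

theory Submission
  imports Defs
begin


definition DD :: "(nat \<Rightarrow> real) set" where "DD = {\<alpha>. \<forall>i. \<alpha> i \<in> {-1,1}}"
definition qv :: "(nat \<Rightarrow> real) \<Rightarrow> real" where "qv \<alpha> = (\<Sum>i. \<alpha> i * (1/2)^Suc i)"
definition sh :: "(nat \<Rightarrow> real) \<Rightarrow> (nat \<Rightarrow> real)" where "sh \<alpha> = (\<lambda>i. \<alpha> (Suc i))"
definition DT :: "(nat \<Rightarrow> real) topology" where
  "DT = product_topology (\<lambda>_. top_of_set {-1,1::real}) UNIV"

lemma DD_cases: "\<alpha> \<in> DD \<Longrightarrow> \<alpha> i = -1 \<or> \<alpha> i = 1"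
  unfolding DD_def by auto

lemma DD_abs: "\<alpha> \<in> DD \<Longrightarrow> \<bar>\<alpha> i\<bar> \<le> 1"
  using DD_cases[of \<alpha> i] by auto

lemma sh_DD: "\<alpha> \<in> DD \<Longrightarrow> sh \<alpha> \<in> DD"
  unfolding DD_def sh_def by auto

lemma geom2: "(\<lambda>i. (1/2::real)^Suc i) sums 1"
proof -
  have "(\<lambda>i. (1/2::real)^i) sums (1 / (1 - 1/2))" by (rule geometric_sums) simp
  then have "(\<lambda>i. (1/2) * (1/2::real)^i) sums ((1/2) * (1 / (1 - 1/2)))" by (rule sums_mult)
  then show ?thesis by simp
qed

lemma summable_q: "\<alpha> \<in> DD \<Longrightarrow> summable (\<lambda>i. \<alpha> i * (1/2::real)^Suc i)"
proof (rule summable_comparison_test)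
  assume "\<alpha> \<in> DD"
  show "\<exists>N. \<forall>n\<ge>N. norm (\<alpha> n * (1/2::real)^Suc n) \<le> (1/2)^Suc n"
    using DD_abs[OF \<open>\<alpha> \<in> DD\<close>] by (auto simp: abs_mult)
  show "summable (\<lambda>i. (1/2::real)^Suc i)" using geom2 sums_summable by blast
qed

lemma q_bound: assumes "\<alpha> \<in> DD" shows "qv \<alpha> \<in> {-1..1}"
proof -
  have s: "summable (\<lambda>i. (1/2::real)^Suc i)" using geom2 sums_summable by blast
  have s2: "summable (\<lambda>i. -((1/2::real)^Suc i))" using summable_minus[OF s] .
  have "qv \<alpha> \<le> (\<Sum>i. (1/2::real)^Suc i)" unfolding qv_def
    by (rule suminf_le) (use DD_abs[OF assms] summable_q[OF assms] s in \<open>auto simp: abs_le_iff\<close>)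
  moreover have "(\<Sum>i. -((1/2::real)^Suc i)) \<le> qv \<alpha>" unfolding qv_def
  proof (rule suminf_le)
    fix n
    have "-1 \<le> \<alpha> n" using DD_abs[OF assms, of n] by (simp add: abs_le_iff)
    from mult_right_mono[OF this, of "(1/2::real)^Suc n"]
    show "-((1/2::real)^Suc n) \<le> \<alpha> n * (1/2)^Suc n" by simp
  qed (use summable_q[OF assms] s2 in auto)
  moreover have "(\<Sum>i. (1/2::real)^Suc i) = 1" using geom2 sums_unique by metis
  moreover have "(\<Sum>i. -((1/2::real)^Suc i)) = -1" using sums_unique[OF sums_minus[OF geom2]] by simp
  ultimately show ?thesis by auto
qed

lemma q_step: assumes "\<alpha> \<in> DD" shows "qv \<alpha> = (\<alpha> 0 + qv (sh \<alpha>)) / 2"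
proof -
  have "(\<Sum>n. \<alpha> (Suc n) * (1/2::real)^Suc (Suc n)) = qv \<alpha> - \<alpha> 0 * (1/2)"
    using suminf_split_head[OF summable_q[OF assms]] unfolding qv_def by simp
  moreover have "(\<Sum>n. \<alpha> (Suc n) * (1/2::real)^Suc (Suc n)) = (1/2) * qv (sh \<alpha>)"
  proof -
    have "(\<Sum>n. \<alpha> (Suc n) * (1/2::real)^Suc (Suc n)) = (\<Sum>n. (1/2) * (sh \<alpha> n * (1/2::real)^Suc n))"
      by (simp add: sh_def mult_ac)
    also have "\<dots> = (1/2) * qv (sh \<alpha>)" unfolding qv_def
      by (rule suminf_mult[OF summable_q[OF sh_DD[OF assms]]])
    finally show ?thesis .
  qed
  ultimately show ?thesis by simp
qed

lemma q_one: assumes "\<alpha> \<in> DD" "qv \<alpha> = 1" shows "\<alpha> i = 1"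
proof -
  have s: "(\<lambda>i. (1 - \<alpha> i) * (1/2::real)^Suc i) sums (1 - qv \<alpha>)"
  proof -
    have "(\<lambda>i. (1 - \<alpha> i) * (1/2::real)^Suc i) = (\<lambda>i. (1/2)^Suc i - \<alpha> i * (1/2::real)^Suc i)"
      by (simp add: fun_eq_iff ring_distribs)
    then show ?thesis using sums_diff[OF geom2 summable_sums[OF summable_q[OF assms(1)]]] unfolding qv_def
      by simp
  qed
  have z: "(\<Sum>i. (1 - \<alpha> i) * (1/2::real)^Suc i) = 0" using sums_unique[OF s] assms(2) by simp
  have pos: "0 \<le> (1 - \<alpha> n) * (1/2::real)^Suc n" for n
    using DD_abs[OF assms(1), of n] by (intro mult_nonneg_nonneg) (auto simp: abs_le_iff)
  have "(1 - \<alpha> i) * (1/2::real)^Suc i = 0"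
    using iffD1[OF suminf_eq_zero_iff[OF sums_summable[OF s] pos] z] by blast
  then have "1 - \<alpha> i = 0" by simp
  then show ?thesis by linarith
qed

lemma q_mone: assumes "\<alpha> \<in> DD" "qv \<alpha> = -1" shows "\<alpha> i = -1"
proof -
  have s: "(\<lambda>i. (1 + \<alpha> i) * (1/2::real)^Suc i) sums (1 + qv \<alpha>)"
  proof -
    have "(\<lambda>i. (1 + \<alpha> i) * (1/2::real)^Suc i) = (\<lambda>i. (1/2)^Suc i + \<alpha> i * (1/2::real)^Suc i)"
      by (simp add: fun_eq_iff ring_distribs)
    then show ?thesis using sums_add[OF geom2 summable_sums[OF summable_q[OF assms(1)]]] unfolding qv_def
      by simp
  qed
  have z: "(\<Sum>i. (1 + \<alpha> i) * (1/2::real)^Suc i) = 0" using sums_unique[OF s] assms(2) by simp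
  have pos: "0 \<le> (1 + \<alpha> n) * (1/2::real)^Suc n" for n
    using DD_abs[OF assms(1), of n] by (intro mult_nonneg_nonneg) (auto simp: abs_le_iff)
  have "(1 + \<alpha> i) * (1/2::real)^Suc i = 0"
    using iffD1[OF suminf_eq_zero_iff[OF sums_summable[OF s] pos] z] by blast
  then have "1 + \<alpha> i = 0" by simp
  then show ?thesis by linarith
qed

lemma q_const: "qv (\<lambda>_. c) = c"
  unfolding qv_def using sums_unique[OF sums_mult[OF geom2, of c]] by simp

fun rr :: "real \<Rightarrow> nat \<Rightarrow> real" where
  "rr t 0 = t"
| "rr t (Suc n) = 2 * rr t n - (if rr t n \<le> 0 then -1 else 1)"

lemma rr_bound: "t \<in> {-1..1} \<Longrightarrow> rr t n \<in> {-1..1}"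
  by (induction n) auto

lemma rr_sum: "t = (\<Sum>i<n. (if rr t i \<le> 0 then -1 else 1) * (1/2::real)^Suc i) + rr t n * (1/2)^n"
proof (induction n)
  case (Suc n)
  define d where "d = (if rr t n \<le> 0 then -1 else (1::real))"
  define k where "k = (1/2::real)^n"
  have e: "rr t (Suc n) = 2 * rr t n - d" by (simp add: d_def)
  have p: "(1/2::real)^Suc n = k/2" by (simp add: k_def)
  have s: "(\<Sum>i<Suc n. (if rr t i \<le> 0 then -1 else 1) * (1/2::real)^Suc i) =
     (\<Sum>i<n. (if rr t i \<le> 0 then -1 else 1) * (1/2::real)^Suc i) + d * (1/2::real)^Suc n"
    by (simp only: sum.lessThan_Suc d_def)
  have ih: "t = (\<Sum>i<n. (if rr t i \<le> 0 then -1 else 1) * (1/2::real)^Suc i) + rr t n * k"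
    using Suc.IH by (simp add: k_def)
  have "d * (k/2) + (2 * rr t n - d) * (k/2) = rr t n * k" by (simp add: algebra_simps)
  then show ?case unfolding s e p using ih by linarith
qed simp

lemma q_surj: assumes "t \<in> {-1..1}" shows "\<exists>\<alpha>\<in>DD. qv \<alpha> = t"
proof -
  define \<alpha> where "\<alpha> = (\<lambda>i. if rr t i \<le> 0 then -1 else (1::real))"
  have "\<alpha> \<in> DD" unfolding \<alpha>_def DD_def by auto
  have "(\<lambda>n. rr t n * (1/2::real)^n) \<longlonglongrightarrow> 0"
  proof (rule Lim_null_comparison)
    show "\<forall>\<^sub>F n in sequentially. norm (rr t n * (1/2::real)^n) \<le> (1/2)^n"
      using rr_bound[OF assms] by (auto simp: abs_mult abs_le_iff intro!: always_eventually mult_right_le_one_le)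
    show "(\<lambda>n. (1/2::real)^n) \<longlonglongrightarrow> 0" by (rule LIMSEQ_power_zero) simp
  qed
  then have "(\<lambda>n. t - rr t n * (1/2::real)^n) \<longlonglongrightarrow> t - 0" by (intro tendsto_intros)
  then have "(\<lambda>n. (\<Sum>i<n. \<alpha> i * (1/2::real)^Suc i)) \<longlonglongrightarrow> t"
  proof -
    have "(\<lambda>n. (\<Sum>i<n. \<alpha> i * (1/2::real)^Suc i)) = (\<lambda>n. t - rr t n * (1/2::real)^n)"
    proof
      fix n show "(\<Sum>i<n. \<alpha> i * (1/2::real)^Suc i) = t - rr t n * (1/2::real)^n"
        unfolding \<alpha>_def using rr_sum[of t n] by linarith
    qed
    then show ?thesis using \<open>(\<lambda>n. t - rr t n * (1/2::real)^n) \<longlonglongrightarrow> t - 0\<close> by simp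
  qed
  then have "(\<lambda>i. \<alpha> i * (1/2::real)^Suc i) sums t" by (simp add: sums_def)
  then show ?thesis using \<open>\<alpha> \<in> DD\<close> sums_unique unfolding qv_def by metis
qed



lemma topspace_DT: "topspace DT = DD"
  unfolding DT_def DD_def by (auto simp: PiE_def extensional_def)

lemma compact_DT: "compact_space DT"
  unfolding DT_def
  by (auto simp: compact_space_product_topology compact_space_subtopology compactin_euclidean_iff finite_imp_compact)

lemma Hausdorff_I: "Hausdorff_space (top_of_set (S::real set))"
  by (simp add: Hausdorff_space_subtopology)

lemma proj_cont: "continuous_map DT euclideanreal (\<lambda>\<alpha>. \<alpha> k)"
  unfolding DT_def
  using continuous_map_product_projection[of k UNIV "\<lambda>_. top_of_set {-1,1::real}"]
  by (simp add: continuous_map_in_subtopology)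

lemma DT_into0: "continuous_map X DT f \<longleftrightarrow> (\<forall>k. continuous_map X euclideanreal (\<lambda>x. f x k) \<and> (\<forall>x\<in>topspace X. f x k \<in> {-1,1}))"
  by (simp add: DT_def continuous_map_componentwise_UNIV continuous_map_in_subtopology image_subset_iff Pi_iff)

lemma DT_into: "continuous_map X DT f \<longleftrightarrow> (\<forall>k. continuous_map X euclideanreal (\<lambda>x. f x k)) \<and> (\<forall>x\<in>topspace X. f x \<in> DD)"
  unfolding DT_into0 DD_def by blast

lemma sh_cont: "continuous_map DT DT sh"
  unfolding DT_into
  by (auto simp: sh_def topspace_DT sh_DD[unfolded sh_def] proj_cont)

lemma q_expand: "\<alpha> \<in> DD \<Longrightarrow> qv \<alpha> = (\<Sum>i<n. \<alpha> i * (1/2::real)^Suc i) + (1/2)^n * qv (\<lambda>i. \<alpha> (i+n))"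
proof (induction n arbitrary: \<alpha>)
  case 0 then show ?case by simp
next
  case (Suc n)
  have ih: "qv (sh \<alpha>) = (\<Sum>i<n. sh \<alpha> i * (1/2::real)^Suc i) + (1/2)^n * qv (\<lambda>i. sh \<alpha> (i+n))"
    using Suc.IH[OF sh_DD[OF Suc.prems]] .
  have s: "(\<Sum>i<Suc n. \<alpha> i * (1/2::real)^Suc i) = \<alpha> 0 / 2 + (1/2) * (\<Sum>i<n. sh \<alpha> i * (1/2::real)^Suc i)"
    by (simp only: sum.lessThan_Suc_shift) (simp add: sh_def sum_distrib_left mult_ac)
  have e: "(\<lambda>i. sh \<alpha> (i+n)) = (\<lambda>i. \<alpha> (i + Suc n))" by (simp add: sh_def)
  show ?case using q_step[OF Suc.prems] ih s e by (simp add: algebra_simps)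
qed

lemma shn_DD: "\<alpha> \<in> DD \<Longrightarrow> (\<lambda>i. \<alpha> (i+n)) \<in> DD" unfolding DD_def by auto

lemma q_approx: "\<alpha> \<in> DD \<Longrightarrow> \<bar>qv \<alpha> - (\<Sum>i<n. \<alpha> i * (1/2::real)^Suc i)\<bar> \<le> (1/2)^n"
proof -
  assume a: "\<alpha> \<in> DD"
  have "\<bar>qv (\<lambda>i. \<alpha> (i+n))\<bar> \<le> 1" using q_bound[OF shn_DD[OF a]] by (simp add: abs_le_iff)
  then have "\<bar>(1/2::real)^n * qv (\<lambda>i. \<alpha> (i+n))\<bar> \<le> (1/2)^n"
    by (simp add: abs_mult mult_left_le_one_le)
  then show ?thesis using q_expand[OF a, of n] by simp
qed

lemma q_cont: "continuous_map DT euclideanreal qv"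
proof -
  have "continuous_map DT Met_TC.mtopology qv"
  proof (rule Met_TC.continuous_map_uniform_limit_alt[where F=sequentially and f="\<lambda>n \<alpha>. (\<Sum>i<n. \<alpha> i * (1/2::real)^Suc i)"])
    show "\<forall>\<^sub>F n in sequentially. continuous_map DT Met_TC.mtopology (\<lambda>\<alpha>. \<Sum>i<n. \<alpha> i * (1/2::real)^Suc i)"
      by (auto intro!: always_eventually continuous_intros proj_cont)
    show "qv \<in> topspace DT \<rightarrow> UNIV" by simp
    fix e :: real assume "0 < e"
    obtain N where N: "(1/2::real)^N < e" using real_arch_pow_inv[OF \<open>0 < e\<close>, of "1/2"] by auto
    show "\<forall>\<^sub>F n in sequentially. \<forall>x\<in>topspace DT. dist (\<Sum>i<n. x i * (1/2::real)^Suc i) (qv x) < e"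
    proof (rule eventually_sequentiallyI[of N])
      fix n assume "N \<le> n"
      then have "(1/2::real)^n \<le> (1/2)^N" by (simp add: power_decreasing)
      show "\<forall>x\<in>topspace DT. dist (\<Sum>i<n. x i * (1/2::real)^Suc i) (qv x) < e"
      proof (intro ballI)
        fix x assume "x \<in> topspace DT"
        then have "\<bar>qv x - (\<Sum>i<n. x i * (1/2::real)^Suc i)\<bar> \<le> (1/2)^n"
          using q_approx by (simp add: topspace_DT)
        moreover have "dist (\<Sum>i<n. x i * (1/2::real)^Suc i) (qv x) = \<bar>qv x - (\<Sum>i<n. x i * (1/2::real)^Suc i)\<bar>"
          by (simp only: dist_real_def abs_minus_commute)
        ultimately show "dist (\<Sum>i<n. x i * (1/2::real)^Suc i) (qv x) < e"
          using N \<open>(1/2::real)^n \<le> (1/2)^N\<close> by linarith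
      qed
    qed
  qed simp
  then show ?thesis by simp
qed

lemma q_cont_I: "continuous_map DT (top_of_set {-1..1}) qv"
  using q_cont q_bound by (auto simp: continuous_map_in_subtopology topspace_DT)

lemma q_proper: "proper_map DT (top_of_set {-1..1}) qv"
  by (intro continuous_closed_imp_proper_map compact_DT Hausdorff_imp_t1_space Hausdorff_I q_cont_I
      continuous_imp_closed_map)

lemma q_image: "qv ` DD = {-1..1}"
  using q_bound q_surj by force



lemma proj_cont': "continuous_map X DT f \<Longrightarrow> continuous_map X euclideanreal (\<lambda>x. f x k)"
  using continuous_map_compose[of X DT f euclideanreal "\<lambda>\<alpha>. \<alpha> k"] proj_cont by (simp add: o_def)

locale ctx =
  fixes P :: "'p topology" and A :: "'a topology" and m :: "'a \<Rightarrow> 'a \<Rightarrow> 'a"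
    and xm xp :: "'p \<Rightarrow> 'a"
  assumes mcb: "midpoint_convex_body_wrt TYPE('p \<times> (nat \<Rightarrow> real)) A m"
    and cxm: "continuous_map P A xm" and cxp: "continuous_map P A xp"
begin

lemma mcont: "continuous_map (prod_topology A A) A (\<lambda>(x, y). m x y)"
  using mcb unfolding midpoint_convex_body_wrt_def midpoint_object_def by blast
lemma idem: "x \<in> topspace A \<Longrightarrow> m x x = x"
  using mcb unfolding midpoint_convex_body_wrt_def midpoint_object_def by blast
lemma comm: "x \<in> topspace A \<Longrightarrow> y \<in> topspace A \<Longrightarrow> m x y = m y x"
  using mcb unfolding midpoint_convex_body_wrt_def midpoint_object_def by blast
lemma medial: "x \<in> topspace A \<Longrightarrow> y \<in> topspace A \<Longrightarrow> z \<in> topspace A \<Longrightarrow> w \<in> topspace A \<Longrightarrow>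
   m (m x y) (m z w) = m (m x z) (m y w)"
  using mcb unfolding midpoint_convex_body_wrt_def midpoint_object_def by blast
lemma cancel: "x \<in> topspace A \<Longrightarrow> y \<in> topspace A \<Longrightarrow> z \<in> topspace A \<Longrightarrow> m x y = m x z \<Longrightarrow> y = z"
  using mcb unfolding midpoint_convex_body_wrt_def cancellative_def by blast
lemma iter: "iterative_wrt TYPE('p \<times> (nat \<Rightarrow> real)) A m"
  using mcb unfolding midpoint_convex_body_wrt_def by blast

lemma m_cont2: "continuous_map X A f \<Longrightarrow> continuous_map X A g \<Longrightarrow> continuous_map X A (\<lambda>x. m (f x) (g x))"
  using continuous_map_compose[of X "prod_topology A A" "\<lambda>x. (f x, g x)" A "\<lambda>(x, y). m x y"] mcont
  by (simp add: o_def continuous_map_paired)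

lemma m_in: "a \<in> topspace A \<Longrightarrow> b \<in> topspace A \<Longrightarrow> m a b \<in> topspace A"
  using continuous_map_image_subset_topspace[OF mcont] by auto

lemma fixpt: "a \<in> topspace A \<Longrightarrow> z \<in> topspace A \<Longrightarrow> z = m a z \<Longrightarrow> z = a"
  by (metis cancel comm idem)

definition XX :: "('p \<times> (nat \<Rightarrow> real)) topology" where "XX = prod_topology P DT"
definition dig :: "real \<Rightarrow> 'p \<Rightarrow> 'a" where "dig b p = (if b \<le> 0 then xm p else xp p)"

lemma topspace_XX: "topspace XX = topspace P \<times> DD"
  by (simp add: XX_def topspace_DT)

lemma dig_in: "p \<in> topspace P \<Longrightarrow> dig b p \<in> topspace A"
  unfolding dig_def using continuous_map_image_subset_topspace[OF cxm] continuous_map_image_subset_topspace[OF cxp] by auto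

lemma dig_m1: "dig (-1) p = xm p" and dig_1: "dig 1 p = xp p"
  by (auto simp: dig_def)

lemma dig_cont:
  assumes g: "continuous_map X euclideanreal g" and f: "continuous_map X P f"
    and gv: "\<And>x. x \<in> topspace X \<Longrightarrow> g x \<in> {-1,1}"
  shows "continuous_map X A (\<lambda>x. dig (g x) (f x))"
proof -
  have "continuous_map X A (\<lambda>x. if g x \<le> (\<lambda>_. 0) x then xm (f x) else xp (f x))"
  proof (rule continuous_map_cases_le)
    show "continuous_map X euclideanreal (\<lambda>_. 0::real)" by simp
    show "continuous_map (subtopology X {x \<in> topspace X. g x \<le> 0}) A (\<lambda>x. xm (f x))"
      by (rule continuous_map_from_subtopology) (use continuous_map_compose[OF f cxm] in \<open>simp add: o_def\<close>)
    show "continuous_map (subtopology X {x \<in> topspace X. 0 \<le> g x}) A (\<lambda>x. xp (f x))"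
      by (rule continuous_map_from_subtopology) (use continuous_map_compose[OF f cxp] in \<open>simp add: o_def\<close>)
    show "\<And>x. x \<in> topspace X \<Longrightarrow> g x = 0 \<Longrightarrow> xm (f x) = xp (f x)"
      using gv by fastforce
  qed (rule g)
  then show ?thesis by (simp add: dig_def)
qed

lemma iter_exists:
  assumes "continuous_map XX (prod_topology A XX) c"
  shows "\<exists>u. continuous_map XX A u \<and> (\<forall>x\<in>topspace XX. u x = m (fst (c x)) (u (snd (c x))))"
  using iter assms unfolding iterative_wrt_def by blast

lemma iter_unique:
  assumes "continuous_map XX (prod_topology A XX) c"
    and "continuous_map XX A v1" "\<forall>x\<in>topspace XX. v1 x = m (fst (c x)) (v1 (snd (c x)))"
    and "continuous_map XX A v2" "\<forall>x\<in>topspace XX. v2 x = m (fst (c x)) (v2 (snd (c x)))"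
    and "x \<in> topspace XX"
  shows "v1 x = v2 x"
proof -
  obtain u where "continuous_map XX A u"
    "\<forall>v. continuous_map XX A v \<and> (\<forall>x\<in>topspace XX. v x = m (fst (c x)) (v (snd (c x)))) \<longrightarrow>
                  (\<forall>x\<in>topspace XX. v x = u x)"
    using iter assms(1) unfolding iterative_wrt_def by blast
  then show ?thesis using assms by metis
qed

definition c0 :: "'p \<times> (nat \<Rightarrow> real) \<Rightarrow> 'a \<times> ('p \<times> (nat \<Rightarrow> real))" where
  "c0 x = (dig (snd x 0) (fst x), (fst x, sh (snd x)))"

lemma fst_cont: "continuous_map XX P fst" by (simp add: XX_def continuous_map_fst)
lemma snd_cont: "continuous_map XX DT snd" by (simp add: XX_def continuous_map_snd)

lemma c0_cont: "continuous_map XX (prod_topology A XX) c0"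
  unfolding c0_def continuous_map_paired
proof
  show "continuous_map XX A (\<lambda>x. dig (snd x 0) (fst x))"
    by (rule dig_cont[OF proj_cont'[OF snd_cont] fst_cont]) (auto simp: topspace_XX DD_def)
  show "continuous_map XX XX (\<lambda>x. (fst x, sh (snd x)))"
    unfolding XX_def continuous_map_paired
    using fst_cont continuous_map_compose[OF snd_cont sh_cont] by (simp add: XX_def o_def)
qed

definition u0 where "u0 = (SOME u. continuous_map XX A u \<and> (\<forall>x\<in>topspace XX. u x = m (fst (c0 x)) (u (snd (c0 x)))))"

lemma u0: "continuous_map XX A u0 \<and> (\<forall>x\<in>topspace XX. u0 x = m (fst (c0 x)) (u0 (snd (c0 x))))"
  unfolding u0_def by (rule someI_ex[OF iter_exists[OF c0_cont]])

lemma u0_cont: "continuous_map XX A u0" using u0 by blast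

lemma u0_eq: "p \<in> topspace P \<Longrightarrow> \<alpha> \<in> DD \<Longrightarrow> u0 (p, \<alpha>) = m (dig (\<alpha> 0) p) (u0 (p, sh \<alpha>))"
  using u0 by (auto simp: topspace_XX c0_def)

lemma u0_in: "p \<in> topspace P \<Longrightarrow> \<alpha> \<in> DD \<Longrightarrow> u0 (p, \<alpha>) \<in> topspace A"
  using continuous_map_image_subset_topspace[OF u0_cont] by (auto simp: topspace_XX)

lemma const_DD: "c \<in> {-1,1} \<Longrightarrow> (\<lambda>_. c) \<in> DD" by (simp add: DD_def)

lemma xm_in: "p \<in> topspace P \<Longrightarrow> xm p \<in> topspace A"
  using continuous_map_image_subset_topspace[OF cxm] by auto
lemma xp_in: "p \<in> topspace P \<Longrightarrow> xp p \<in> topspace A"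
  using continuous_map_image_subset_topspace[OF cxp] by auto

lemma u0_const1: assumes p: "p \<in> topspace P" shows "u0 (p, \<lambda>_. 1) = xp p"
proof -
  have "u0 (p, \<lambda>_. 1) = m (xp p) (u0 (p, \<lambda>_. 1))"
    using u0_eq[OF p const_DD[of 1]] by (simp add: sh_def dig_1)
  then show ?thesis using fixpt[OF xp_in[OF p] u0_in[OF p const_DD[of 1]]] by simp
qed

lemma u0_constm1: assumes p: "p \<in> topspace P" shows "u0 (p, \<lambda>_. -1) = xm p"
proof -
  have "u0 (p, \<lambda>_. -1) = m (xm p) (u0 (p, \<lambda>_. -1))"
    using u0_eq[OF p const_DD[of "-1"]] by (simp add: sh_def dig_m1)
  then show ?thesis using fixpt[OF xm_in[OF p] u0_in[OF p const_DD[of "-1"]]] by simp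
qed

lemma u0_factor_n:
  assumes p: "p \<in> topspace P"
  shows "\<alpha> \<in> DD \<Longrightarrow> \<beta> \<in> DD \<Longrightarrow> qv \<alpha> = qv \<beta> \<Longrightarrow> \<alpha> n \<noteq> \<beta> n \<Longrightarrow> (\<forall>i<n. \<alpha> i = \<beta> i) \<Longrightarrow> u0 (p, \<alpha>) = u0 (p, \<beta>)"
proof (induction n arbitrary: \<alpha> \<beta>)
  case 0
  have e: "\<alpha> 0 + qv (sh \<alpha>) = \<beta> 0 + qv (sh \<beta>)" using q_step[OF 0(1)] q_step[OF 0(2)] 0(3) by simp
  have ba: "qv (sh \<alpha>) \<in> {-1..1}" "qv (sh \<beta>) \<in> {-1..1}" using q_bound sh_DD 0 by auto
  have xin: "xm p \<in> topspace A" "xp p \<in> topspace A" using xm_in[OF p] xp_in[OF p] by auto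
  consider "\<alpha> 0 = -1" "\<beta> 0 = 1" | "\<alpha> 0 = 1" "\<beta> 0 = -1" using DD_cases[OF 0(1), of 0] DD_cases[OF 0(2), of 0] 0(4) by fastforce
  then show ?case
  proof cases
    case 1
    then have "qv (sh \<alpha>) = 1" "qv (sh \<beta>) = -1" using e ba by auto
    then have "sh \<alpha> = (\<lambda>_. 1)" "sh \<beta> = (\<lambda>_. -1)" using q_one q_mone sh_DD 0 by auto
    then show ?thesis using u0_eq[OF p 0(1)] u0_eq[OF p 0(2)] 1 u0_const1[OF p] u0_constm1[OF p]
      by (simp add: dig_1 dig_m1 comm[OF xin])
  next
    case 2
    then have "qv (sh \<alpha>) = -1" "qv (sh \<beta>) = 1" using e ba by auto
    then have "sh \<alpha> = (\<lambda>_. -1)" "sh \<beta> = (\<lambda>_. 1)" using q_one q_mone sh_DD 0 by auto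
    then show ?thesis using u0_eq[OF p 0(1)] u0_eq[OF p 0(2)] 2 u0_const1[OF p] u0_constm1[OF p]
      by (simp add: dig_1 dig_m1 comm[OF xin])
  qed
next
  case (Suc n)
  have h0: "\<alpha> 0 = \<beta> 0" using Suc.prems(5) by auto
  have "qv (sh \<alpha>) = qv (sh \<beta>)" using q_step[OF Suc.prems(1)] q_step[OF Suc.prems(2)] Suc.prems(3) h0 by simp
  moreover have "sh \<alpha> n \<noteq> sh \<beta> n" "\<forall>i<n. sh \<alpha> i = sh \<beta> i" using Suc.prems(4,5) by (auto simp: sh_def)
  ultimately have "u0 (p, sh \<alpha>) = u0 (p, sh \<beta>)" using Suc.IH sh_DD Suc.prems(1,2) by blast
  then show ?case using u0_eq[OF p Suc.prems(1)] u0_eq[OF p Suc.prems(2)] h0 by simp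
qed

lemma u0_factor:
  assumes p: "p \<in> topspace P" and "\<alpha> \<in> DD" "\<beta> \<in> DD" "qv \<alpha> = qv \<beta>"
  shows "u0 (p, \<alpha>) = u0 (p, \<beta>)"
proof (cases "\<alpha> = \<beta>")
  case False
  then have "\<exists>n. \<alpha> n \<noteq> \<beta> n" by auto
  then obtain n where "\<alpha> n \<noteq> \<beta> n" "\<forall>i<n. \<alpha> i = \<beta> i"
    using exists_least_iff[of "\<lambda>n. \<alpha> n \<noteq> \<beta> n"] by blast
  then show ?thesis using u0_factor_n[OF p] assms by blast
qed simp

end


context ctx begin

definition YY where "YY = prod_topology P (top_of_set {-1..1::real})"
definition QQ :: "'p \<times> (nat \<Rightarrow> real) \<Rightarrow> 'p \<times> real" where "QQ x = (fst x, qv (snd x))"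

lemma QQ_cont: "continuous_map XX YY QQ"
  unfolding QQ_def YY_def continuous_map_paired
  using fst_cont continuous_map_compose[OF snd_cont q_cont_I] by (simp add: o_def)

lemma QQ_quot: "quotient_map XX YY QQ"
proof (rule continuous_closed_imp_quotient_map[OF QQ_cont])
  have "proper_map (prod_topology P DT) (prod_topology P (top_of_set {-1..1})) (\<lambda>(x,y). (id x, qv y))"
    using proper_map_prod q_proper proper_map_id by blast
  moreover have "(\<lambda>(x,y). (id x, qv y)) = QQ" by (auto simp: QQ_def fun_eq_iff)
  ultimately show "closed_map XX YY QQ" unfolding XX_def YY_def using proper_imp_closed_map by metis
  show "QQ ` topspace XX = topspace YY"
    unfolding QQ_def topspace_XX YY_def using q_image by (force simp: image_iff)
qed

definition hh :: "'p \<times> real \<Rightarrow> 'a" where "hh x = u0 (fst x, SOME \<alpha>. \<alpha> \<in> DD \<and> qv \<alpha> = snd x)"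

lemma hh_q: "p \<in> topspace P \<Longrightarrow> \<alpha> \<in> DD \<Longrightarrow> hh (p, qv \<alpha>) = u0 (p, \<alpha>)"
proof -
  assume p: "p \<in> topspace P" and a: "\<alpha> \<in> DD"
  have "\<exists>\<beta>. \<beta> \<in> DD \<and> qv \<beta> = qv \<alpha>" using a by blast
  then have "(SOME \<beta>. \<beta> \<in> DD \<and> qv \<beta> = qv \<alpha>) \<in> DD \<and> qv (SOME \<beta>. \<beta> \<in> DD \<and> qv \<beta> = qv \<alpha>) = qv \<alpha>"
    by (rule someI_ex)
  then show ?thesis unfolding hh_def fst_conv snd_conv using u0_factor[OF p _ a] by blast
qed

lemma hh_cont: "continuous_map YY A hh"
proof (rule continuous_compose_quotient_map[OF QQ_quot])
  show "continuous_map XX A (hh \<circ> QQ)"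
    by (rule continuous_map_eq[OF u0_cont]) (auto simp: topspace_XX QQ_def hh_q)
qed

lemma hh_in: "p \<in> topspace P \<Longrightarrow> t \<in> {-1..1} \<Longrightarrow> hh (p, t) \<in> topspace A"
  using continuous_map_image_subset_topspace[OF hh_cont] by (auto simp: YY_def)

lemma hh_m1: assumes p: "p \<in> topspace P" shows "hh (p, -1) = xm p"
proof -
  have "hh (p, -1) = hh (p, qv (\<lambda>_. -1))" by (simp only: q_const)
  also have "\<dots> = u0 (p, \<lambda>_. -1)" by (rule hh_q[OF p const_DD]) simp
  also have "\<dots> = xm p" by (rule u0_constm1[OF p])
  finally show ?thesis .
qed

lemma hh_1: assumes p: "p \<in> topspace P" shows "hh (p, 1) = xp p"
proof -
  have "hh (p, 1) = hh (p, qv (\<lambda>_. 1))" by (simp only: q_const)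
  also have "\<dots> = u0 (p, \<lambda>_. 1)" by (rule hh_q[OF p const_DD]) simp
  also have "\<dots> = xp p" by (rule u0_const1[OF p])
  finally show ?thesis .
qed

lemma hh_step: assumes p: "p \<in> topspace P" and t: "t \<in> {-1..1}" and b: "b \<in> {-1,1}"
  shows "hh (p, (b + t) / 2) = m (dig b p) (hh (p, t))"
proof -
  obtain \<alpha> where a: "\<alpha> \<in> DD" "qv \<alpha> = t" using q_surj[OF t] by blast
  define \<beta> where "\<beta> = case_nat b \<alpha>"
  have bD: "\<beta> \<in> DD" using a b unfolding \<beta>_def DD_def by (auto split: nat.splits)
  have sb: "sh \<beta> = \<alpha>" by (simp add: \<beta>_def sh_def)
  have qb: "qv \<beta> = (b + t) / 2" using q_step[OF bD] sb a by (simp add: \<beta>_def)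
  have "hh (p, (b + t) / 2) = hh (p, qv \<beta>)" by (simp only: qb)
  also have "\<dots> = u0 (p, \<beta>)" by (rule hh_q[OF p bD])
  also have "\<dots> = m (dig b p) (u0 (p, \<alpha>))" using u0_eq[OF p bD] sb by (simp add: \<beta>_def)
  also have "u0 (p, \<alpha>) = hh (p, t)" using hh_q[OF p a(1)] a(2) by simp
  finally show ?thesis .
qed

lemma hh_half: assumes p: "p \<in> topspace P" and t: "t \<in> {-1..1}"
  shows "hh (p, t / 2) = m (m (xm p) (xp p)) (hh (p, t))"
proof -
  obtain \<alpha> where a: "\<alpha> \<in> DD" "qv \<alpha> = t" using q_surj[OF t] by blast
  define s where "s = qv (sh \<alpha>)"
  have s: "s \<in> {-1..1}" using q_bound[OF sh_DD[OF a(1)]] s_def by simp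
  have ts: "t = (\<alpha> 0 + s) / 2" using q_step[OF a(1)] a s_def by simp
  have xin: "xm p \<in> topspace A" "xp p \<in> topspace A" using xm_in[OF p] xp_in[OF p] by auto
  have hs: "hh (p, s) \<in> topspace A" using hh_in[OF p s] .
  have "\<alpha> 0 = -1 \<or> \<alpha> 0 = 1" using DD_cases[OF a(1)] by blast
  then show ?thesis
  proof (elim disjE)
    assume c: "\<alpha> 0 = -1"
    have tv: "t = (-1 + s) / 2" using ts c by simp
    have s1: "(1 + s) / 2 \<in> {-1..1}" using s by auto
    have "hh (p, t / 2) = hh (p, (-1 + (1 + s) / 2) / 2)"
      by (rule arg_cong[where f="\<lambda>x. hh (p, x)"]) (simp add: tv field_simps)
    also have "\<dots> = m (xm p) (hh (p, (1 + s) / 2))" using hh_step[OF p s1, of "-1"] by (simp only: dig_m1) simp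
    also have "hh (p, (1 + s) / 2) = m (xp p) (hh (p, s))" using hh_step[OF p s, of 1] by (simp only: dig_1) simp
    finally have l: "hh (p, t / 2) = m (xm p) (m (xp p) (hh (p, s)))" .
    have "hh (p, t) = hh (p, (-1 + s) / 2)"
      by (rule arg_cong[where f="\<lambda>x. hh (p, x)"]) (simp add: tv field_simps)
    also have "\<dots> = m (xm p) (hh (p, s))" using hh_step[OF p s, of "-1"] by (simp only: dig_m1) simp
    finally have r: "hh (p, t) = m (xm p) (hh (p, s))" .
    show ?thesis unfolding l r
      using medial[OF xin(1) xin(1) xin(2) hs] idem[OF xin(1)] by simp
  next
    assume c: "\<alpha> 0 = 1"
    have tv: "t = (1 + s) / 2" using ts c by simp
    have s1: "(-1 + s) / 2 \<in> {-1..1}" using s by auto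
    have "hh (p, t / 2) = hh (p, (1 + (-1 + s) / 2) / 2)"
      by (rule arg_cong[where f="\<lambda>x. hh (p, x)"]) (simp add: tv field_simps)
    also have "\<dots> = m (xp p) (hh (p, (-1 + s) / 2))" using hh_step[OF p s1, of 1] by (simp only: dig_1) simp
    also have "hh (p, (-1 + s) / 2) = m (xm p) (hh (p, s))" using hh_step[OF p s, of "-1"] by (simp only: dig_m1) simp
    finally have l: "hh (p, t / 2) = m (xp p) (m (xm p) (hh (p, s)))" .
    have "hh (p, t) = hh (p, (1 + s) / 2)"
      by (rule arg_cong[where f="\<lambda>x. hh (p, x)"]) (simp add: tv field_simps)
    also have "\<dots> = m (xp p) (hh (p, s))" using hh_step[OF p s, of 1] by (simp only: dig_1) simp
    finally have r: "hh (p, t) = m (xp p) (hh (p, s))" .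
    show ?thesis unfolding l r
      using medial[OF xin(2) xin(2) xin(1) hs] idem[OF xin(2)] comm[OF xin] by simp
  qed
qed

end


definition ev :: "(nat \<Rightarrow> real) \<Rightarrow> (nat \<Rightarrow> real)" where "ev \<gamma> = (\<lambda>i. \<gamma> (2*i))"
definition od :: "(nat \<Rightarrow> real) \<Rightarrow> (nat \<Rightarrow> real)" where "od \<gamma> = (\<lambda>i. \<gamma> (2*i+1))"

lemma ev_DD: "\<gamma> \<in> DD \<Longrightarrow> ev \<gamma> \<in> DD" and od_DD: "\<gamma> \<in> DD \<Longrightarrow> od \<gamma> \<in> DD"
  unfolding DD_def ev_def od_def by auto

lemma ev_cont: "continuous_map DT DT ev"
proof -
  have "\<forall>k. continuous_map DT euclideanreal (\<lambda>x. ev x k)" by (simp add: ev_def proj_cont)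
  then show ?thesis using ev_DD by (simp add: DT_into topspace_DT)
qed

lemma od_cont: "continuous_map DT DT od"
proof -
  have "\<forall>k. continuous_map DT euclideanreal (\<lambda>x. od x k)" by (simp add: od_def proj_cont)
  then show ?thesis using od_DD by (simp add: DT_into topspace_DT)
qed

lemma sh_ev: "sh (ev \<gamma>) = ev (sh (sh \<gamma>))" and sh_od: "sh (od \<gamma>) = od (sh (sh \<gamma>))"
  by (auto simp: sh_def ev_def od_def fun_eq_iff)

lemma ev0: "ev \<gamma> 0 = \<gamma> 0" and od0: "od \<gamma> 0 = \<gamma> 1"
  by (auto simp: ev_def od_def)

context ctx begin

definition c2 :: "'p \<times> (nat \<Rightarrow> real) \<Rightarrow> 'a \<times> ('p \<times> (nat \<Rightarrow> real))" where
  "c2 x = (m (dig (snd x 0) (fst x)) (dig (snd x 1) (fst x)), (fst x, sh (sh (snd x))))"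

lemma c2_cont: "continuous_map XX (prod_topology A XX) c2"
  unfolding c2_def continuous_map_paired
proof
  show "continuous_map XX A (\<lambda>x. m (dig (snd x 0) (fst x)) (dig (snd x 1) (fst x)))"
    by (intro m_cont2 dig_cont[OF proj_cont'[OF snd_cont] fst_cont]) (auto simp: topspace_XX DD_def)
  show "continuous_map XX XX (\<lambda>x. (fst x, sh (sh (snd x))))"
    unfolding XX_def continuous_map_paired
    using fst_cont continuous_map_compose[OF continuous_map_compose[OF snd_cont sh_cont] sh_cont]
    by (simp add: XX_def o_def)
qed

lemma pair_cont: "continuous_map DT DT f \<Longrightarrow> continuous_map XX XX (\<lambda>x. (fst x, f (snd x)))"
  unfolding XX_def continuous_map_paired
  using fst_cont continuous_map_compose[OF snd_cont] by (simp add: XX_def o_def)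

definition f2 where "f2 x = m (u0 (fst x, ev (snd x))) (u0 (fst x, od (snd x)))"
definition g2 where "g2 x = hh (fst x, (qv (ev (snd x)) + qv (od (snd x))) / 2)"

lemma f2_cont: "continuous_map XX A f2"
  unfolding f2_def
  using m_cont2[OF continuous_map_compose[OF pair_cont[OF ev_cont] u0_cont] continuous_map_compose[OF pair_cont[OF od_cont] u0_cont]]
  by (simp add: o_def)

lemma g2_cont: "continuous_map XX A g2"
proof -
  have a: "continuous_map XX euclideanreal (\<lambda>x. qv (ev (snd x)))"
    using continuous_map_compose[OF continuous_map_compose[OF snd_cont ev_cont] q_cont] by (simp add: o_def)
  have b: "continuous_map XX euclideanreal (\<lambda>x. qv (od (snd x)))"
    using continuous_map_compose[OF continuous_map_compose[OF snd_cont od_cont] q_cont] by (simp add: o_def)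
  have c: "continuous_map XX euclideanreal (\<lambda>x. (qv (ev (snd x)) + qv (od (snd x))) / 2)"
    by (intro continuous_intros a b) auto
  have "continuous_map XX YY (\<lambda>x. (fst x, (qv (ev (snd x)) + qv (od (snd x))) / 2))"
    unfolding YY_def continuous_map_paired continuous_map_in_subtopology
    using fst_cont c q_bound[OF ev_DD] q_bound[OF od_DD] by (fastforce simp: topspace_XX)
  from continuous_map_compose[OF this hh_cont] show ?thesis unfolding g2_def[abs_def] by (simp add: o_def)
qed

lemma f2_iter: "\<forall>x\<in>topspace XX. f2 x = m (fst (c2 x)) (f2 (snd (c2 x)))"
proof
  fix x assume "x \<in> topspace XX"
  then obtain p \<gamma> where x: "x = (p, \<gamma>)" and p: "p \<in> topspace P" and g: "\<gamma> \<in> DD" by (auto simp: topspace_XX)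
  have e: "u0 (p, ev \<gamma>) = m (dig (\<gamma> 0) p) (u0 (p, ev (sh (sh \<gamma>))))"
    using u0_eq[OF p ev_DD[OF g]] by (simp add: sh_ev ev0)
  have o: "u0 (p, od \<gamma>) = m (dig (\<gamma> 1) p) (u0 (p, od (sh (sh \<gamma>))))"
    using u0_eq[OF p od_DD[OF g]] by (simp add: sh_od od0)
  have g2: "sh (sh \<gamma>) \<in> DD" using g sh_DD by blast
  show "f2 x = m (fst (c2 x)) (f2 (snd (c2 x)))"
    unfolding x f2_def c2_def fst_conv snd_conv e o
    by (rule medial[OF dig_in[OF p] u0_in[OF p ev_DD[OF g2]] dig_in[OF p] u0_in[OF p od_DD[OF g2]]])
qed

lemma g2_iter: "\<forall>x\<in>topspace XX. g2 x = m (fst (c2 x)) (g2 (snd (c2 x)))"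
proof
  fix x assume "x \<in> topspace XX"
  then obtain p \<gamma> where x: "x = (p, \<gamma>)" and p: "p \<in> topspace P" and g: "\<gamma> \<in> DD" by (auto simp: topspace_XX)
  define \<gamma>' where "\<gamma>' = sh (sh \<gamma>)"
  have g': "\<gamma>' \<in> DD" using g sh_DD \<gamma>'_def by blast
  define a where "a = qv (ev \<gamma>')"
  define b where "b = qv (od \<gamma>')"
  define t where "t = (a + b) / 2"
  have t: "t \<in> {-1..1}" using q_bound[OF ev_DD[OF g']] q_bound[OF od_DD[OF g']] by (auto simp: t_def a_def b_def)
  have qe: "qv (ev \<gamma>) = (\<gamma> 0 + a) / 2" using q_step[OF ev_DD[OF g]] by (simp add: sh_ev ev0 a_def \<gamma>'_def)
  have qo: "qv (od \<gamma>) = (\<gamma> 1 + b) / 2" using q_step[OF od_DD[OF g]] by (simp add: sh_od od0 b_def \<gamma>'_def)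
  have lhs: "g2 x = hh (p, ((\<gamma> 0 + a) / 2 + (\<gamma> 1 + b) / 2) / 2)" by (simp add: g2_def x qe qo)
  have rhs: "m (fst (c2 x)) (g2 (snd (c2 x))) = m (m (dig (\<gamma> 0) p) (dig (\<gamma> 1) p)) (hh (p, t))"
    by (simp add: g2_def c2_def x t_def a_def b_def \<gamma>'_def)
  have xin: "xm p \<in> topspace A" "xp p \<in> topspace A" using xm_in[OF p] xp_in[OF p] by auto
  have c0: "\<gamma> 0 = -1 \<or> \<gamma> 0 = 1" and c1: "\<gamma> 1 = -1 \<or> \<gamma> 1 = 1" using DD_cases[OF g] by auto
  have "hh (p, ((\<gamma> 0 + a) / 2 + (\<gamma> 1 + b) / 2) / 2) = m (m (dig (\<gamma> 0) p) (dig (\<gamma> 1) p)) (hh (p, t))"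
    using c0
  proof (elim disjE)
    assume d0: "\<gamma> 0 = -1"
    show ?thesis using c1
    proof (elim disjE)
      assume d1: "\<gamma> 1 = -1"
      have "hh (p, ((\<gamma> 0 + a) / 2 + (\<gamma> 1 + b) / 2) / 2) = hh (p, (-1 + t) / 2)"
        by (rule arg_cong[where f="\<lambda>x. hh (p, x)"]) (simp add: d0 d1 d1[unfolded One_nat_def] t_def field_simps)
      also have "\<dots> = m (xm p) (hh (p, t))" using hh_step[OF p t, of "-1"] by (simp only: dig_m1) simp
      finally show ?thesis by (simp add: d0 d1 d1[unfolded One_nat_def] dig_m1 idem[OF xin(1)])
    next
      assume d1: "\<gamma> 1 = 1"
      have "hh (p, ((\<gamma> 0 + a) / 2 + (\<gamma> 1 + b) / 2) / 2) = hh (p, t / 2)"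
        by (rule arg_cong[where f="\<lambda>x. hh (p, x)"]) (simp add: d0 d1 d1[unfolded One_nat_def] t_def field_simps)
      also have "\<dots> = m (m (xm p) (xp p)) (hh (p, t))" by (rule hh_half[OF p t])
      finally show ?thesis by (simp add: d0 d1 d1[unfolded One_nat_def] dig_m1 dig_1)
    qed
  next
    assume d0: "\<gamma> 0 = 1"
    show ?thesis using c1
    proof (elim disjE)
      assume d1: "\<gamma> 1 = -1"
      have "hh (p, ((\<gamma> 0 + a) / 2 + (\<gamma> 1 + b) / 2) / 2) = hh (p, t / 2)"
        by (rule arg_cong[where f="\<lambda>x. hh (p, x)"]) (simp add: d0 d1 d1[unfolded One_nat_def] t_def field_simps)
      also have "\<dots> = m (m (xm p) (xp p)) (hh (p, t))" by (rule hh_half[OF p t])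
      finally show ?thesis by (simp add: d0 d1 d1[unfolded One_nat_def] dig_m1 dig_1 comm[OF xin])
    next
      assume d1: "\<gamma> 1 = 1"
      have "hh (p, ((\<gamma> 0 + a) / 2 + (\<gamma> 1 + b) / 2) / 2) = hh (p, (1 + t) / 2)"
        by (rule arg_cong[where f="\<lambda>x. hh (p, x)"]) (simp add: d0 d1 d1[unfolded One_nat_def] t_def field_simps)
      also have "\<dots> = m (xp p) (hh (p, t))" using hh_step[OF p t, of 1] by (simp only: dig_1) simp
      finally show ?thesis by (simp add: d0 d1 d1[unfolded One_nat_def] dig_1 idem[OF xin(2)])
    qed
  qed
  then show "g2 x = m (fst (c2 x)) (g2 (snd (c2 x)))" unfolding lhs rhs .
qed

lemma hh_mid:
  assumes p: "p \<in> topspace P" and x: "x \<in> {-1..1}" and y: "y \<in> {-1..1}"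
  shows "hh (p, (x + y) / 2) = m (hh (p, x)) (hh (p, y))"
proof -
  obtain \<alpha> where a: "\<alpha> \<in> DD" "qv \<alpha> = x" using q_surj[OF x] by blast
  obtain \<beta> where b: "\<beta> \<in> DD" "qv \<beta> = y" using q_surj[OF y] by blast
  define \<gamma> where "\<gamma> = (\<lambda>i. if even i then \<alpha> (i div 2) else \<beta> (i div 2))"
  have eg: "ev \<gamma> = \<alpha>" by (simp add: ev_def \<gamma>_def)
  have og: "od \<gamma> = \<beta>" by (simp add: od_def \<gamma>_def)
  have g: "\<gamma> \<in> DD" using a(1) b(1) unfolding DD_def \<gamma>_def by auto
  have "(p, \<gamma>) \<in> topspace XX" using p g by (simp add: topspace_XX)
  then have "f2 (p, \<gamma>) = g2 (p, \<gamma>)"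
    by (rule iter_unique[OF c2_cont f2_cont f2_iter g2_cont g2_iter])
  moreover have "f2 (p, \<gamma>) = m (hh (p, x)) (hh (p, y))"
    unfolding f2_def fst_conv snd_conv eg og using hh_q[OF p a(1)] hh_q[OF p b(1)] a(2) b(2) by simp
  moreover have "g2 (p, \<gamma>) = hh (p, (x + y) / 2)"
    unfolding g2_def fst_conv snd_conv eg og a(2) b(2) ..
  ultimately show ?thesis by simp
qed

lemma hh_unique:
  assumes gc: "continuous_map YY A g"
    and ge: "\<forall>p\<in>topspace P. g (p, -1) = xm p \<and> g (p, 1) = xp p"
    and gm: "\<forall>p\<in>topspace P. \<forall>x\<in>{-1..1}. \<forall>y\<in>{-1..1}. g (p, (x + y) / 2) = m (g (p, x)) (g (p, y))"
    and p: "p \<in> topspace P" and t: "t \<in> {-1..1}"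
  shows "g (p, t) = hh (p, t)"
proof -
  define v where "v = g \<circ> QQ"
  have vc: "continuous_map XX A v" unfolding v_def by (rule continuous_map_compose[OF QQ_cont gc])
  have vi: "\<forall>x\<in>topspace XX. v x = m (fst (c0 x)) (v (snd (c0 x)))"
  proof
    fix x assume "x \<in> topspace XX"
    then obtain p \<alpha> where x: "x = (p, \<alpha>)" and p: "p \<in> topspace P" and a: "\<alpha> \<in> DD" by (auto simp: topspace_XX)
    have a0: "\<alpha> 0 \<in> {-1..1}" using DD_cases[OF a, of 0] by auto
    have s: "qv (sh \<alpha>) \<in> {-1..1}" using q_bound[OF sh_DD[OF a]] .
    have d: "g (p, \<alpha> 0) = dig (\<alpha> 0) p" using DD_cases[OF a, of 0] ge p by (auto simp: dig_def)
    have "v x = g (p, (\<alpha> 0 + qv (sh \<alpha>)) / 2)" unfolding v_def x o_def QQ_def fst_conv snd_conv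
      by (simp only: q_step[OF a, symmetric])
    also have "\<dots> = m (g (p, \<alpha> 0)) (g (p, qv (sh \<alpha>)))" using gm p a0 s by blast
    also have "\<dots> = m (fst (c0 x)) (v (snd (c0 x)))" by (simp add: d x c0_def v_def QQ_def)
    finally show "v x = m (fst (c0 x)) (v (snd (c0 x)))" .
  qed
  obtain \<alpha> where a: "\<alpha> \<in> DD" "qv \<alpha> = t" using q_surj[OF t] by blast
  have px: "(p, \<alpha>) \<in> topspace XX" using p a by (simp add: topspace_XX)
  have "v (p, \<alpha>) = u0 (p, \<alpha>)"
    by (rule iter_unique[OF c0_cont vc vi u0_cont _ px]) (use u0 in blast)
  then show ?thesis using hh_q[OF p a(1)] a(2) by (simp add: v_def QQ_def)
qed

end

theorem mainTheorem18:
  fixes P :: "'p topology" and A :: "'a topology" and m :: "'a \<Rightarrow> 'a \<Rightarrow> 'a"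
    and xm xp :: "'p \<Rightarrow> 'a"
  assumes "midpoint_convex_body_wrt TYPE('p \<times> (nat \<Rightarrow> real)) A m"
    and "continuous_map P A xm" and "continuous_map P A xp"
  shows "\<exists>h. continuous_map (prod_topology P (subtopology euclideanreal {-1..1})) A h \<and>
             (\<forall>p\<in>topspace P. h (p, -1) = xm p \<and> h (p, 1) = xp p) \<and>
             (\<forall>p\<in>topspace P. \<forall>x\<in>{-1..1}. \<forall>y\<in>{-1..1}.
                 h (p, (x + y) / 2) = m (h (p, x)) (h (p, y))) \<and>
             (\<forall>g. continuous_map (prod_topology P (subtopology euclideanreal {-1..1})) A g \<and>
                  (\<forall>p\<in>topspace P. g (p, -1) = xm p \<and> g (p, 1) = xp p) \<and>
                  (\<forall>p\<in>topspace P. \<forall>x\<in>{-1..1}. \<forall>y\<in>{-1..1}.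
                      g (p, (x + y) / 2) = m (g (p, x)) (g (p, y))) \<longrightarrow>
                  (\<forall>p\<in>topspace P. \<forall>t\<in>{-1..1}. g (p, t) = h (p, t)))"
proof -
  interpret ctx P A m xm xp using assms by (unfold_locales)
  show ?thesis
  proof (intro exI conjI allI impI ballI)
    show "continuous_map (prod_topology P (subtopology euclideanreal {-1..1})) A hh"
      using hh_cont by (simp add: YY_def)
  next
    fix p assume "p \<in> topspace P" then show "hh (p, -1) = xm p" by (rule hh_m1)
  next
    fix p assume "p \<in> topspace P" then show "hh (p, 1) = xp p" by (rule hh_1)
  next
    fix p x y assume "p \<in> topspace P" "x \<in> {-1..1::real}" "y \<in> {-1..1::real}"
    then show "hh (p, (x + y) / 2) = m (hh (p, x)) (hh (p, y))" by (rule hh_mid)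
  next
    fix g p t
    assume H: "continuous_map (prod_topology P (subtopology euclideanreal {-1..1})) A g \<and>
                  (\<forall>p\<in>topspace P. g (p, -1) = xm p \<and> g (p, 1) = xp p) \<and>
                  (\<forall>p\<in>topspace P. \<forall>x\<in>{-1..1}. \<forall>y\<in>{-1..1}.
                      g (p, (x + y) / 2) = m (g (p, x)) (g (p, y)))"
      and "p \<in> topspace P" "t \<in> {-1..1::real}"
    then show "g (p, t) = hh (p, t)" using hh_unique[of g p t] by (simp add: YY_def)
  qed
qed


end
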